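(* Let $\sigma$ be a sequence of integers, let $P_1,\dots,P_{\mathsf{lis}(\sigma)}$ be the piles produced by Patience Sorting on $\sigma$ and $Q_1,\dots,Q_{\mathsf{lis}(\sigma)}$ the piles produced by Reversed Patience Sorting on $\sigma$. Then $P_{k} \cap Q_{\mathsf{lis}(\sigma) - k + 1} \ne \emptyset$ for all $k$ with $1 \le k \le \mathsf{lis}(\sigma)$.
   Context: $\sigma=\langle\sigma(1),\dots,\sigma(n)\rangle$, repetitions allowed; pile elements are identified by their positions in $\sigma$, so intersection of piles means sharing a position. Patience Sorting: initially $\ell=0$ and dummy pile $P_0=\{-\infty\}$; for $i=1,\dots,n$, if $\sigma(i)>\mathtt{top}(P_\ell)$ increment $\ell$ and push $\sigma(i)$ onto a new pile $P_\ell$, else push it onto $P_j$ for the smallest $j$ with $\sigma(i)\le\mathtt{top}(P_j)$ ($\mathtt{top}$ = most recently pushed element). Reversed Patience Sorting: initially $\ell=0$ and dummy pile $Q_0=\{+\infty\}$; for $i=n,n-1,\dots,1$, if $\sigma(i)<\mathtt{top}(Q_\ell)$ increment $\ell$ and push $\sigma(i)$ onto a new pile $Q_\ell$, else push it onto $Q_j$ for the smallest $j$ with $\sigma(i)>\mathtt{top}(Q_j)$. Both procedures end with exactly $\mathsf{lis}(\sigma)$ piles, where $\mathsf{lis}(\sigma)$ is the length of a longest strictly increasing subsequence. *)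

theory Defs
  imports "HOL-Library.Sublist"
begin

text \<open>Sequences are int lists; positions are 0-based indices into the list.
  A pile is a list of positions whose head is its top (most recently pushed element).
  A pile configuration is a list of piles; entry j (0-based) is pile P_(j+1).\<close>

definition lis :: "int list \<Rightarrow> nat" where
  "lis s = Max {length xs | xs. subseq xs s \<and> sorted_wrt (<) xs}"

definition top_val :: "int list \<Rightarrow> nat list \<Rightarrow> int" where
  "top_val s p = s ! hd p"

definition pstep :: "int list \<Rightarrow> nat list list \<Rightarrow> nat \<Rightarrow> nat list list" where
  "pstep s ps i =
     (if ps = [] \<or> s ! i > top_val s (last ps) then ps @ [[i]]
      else (let j = (LEAST j. j < length ps \<and> s ! i \<le> top_val s (ps ! j))
            in ps[j := i # ps ! j]))"

definition qstep :: "int list \<Rightarrow> nat list list \<Rightarrow> nat \<Rightarrow> nat list list" where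
  "qstep s qs i =
     (if qs = [] \<or> s ! i < top_val s (last qs) then qs @ [[i]]
      else (let j = (LEAST j. j < length qs \<and> s ! i \<ge> top_val s (qs ! j))
            in qs[j := i # qs ! j]))"

definition patience :: "int list \<Rightarrow> nat list list" where
  "patience s = foldl (pstep s) [] [0..<length s]"

definition rev_patience :: "int list \<Rightarrow> nat list list" where
  "rev_patience s = foldl (qstep s) [] (rev [0..<length s])"

end

theory Submission imports Defs begin

lemma subseq_idx:
  assumes "subseq xs s"
  shows "\<exists>c. sorted_wrt (<) c \<and> (\<forall>x\<in>set c. x < length s) \<and> xs = map (nth s) c"
  using assms
proof (induction rule: list_emb.induct)
  case (list_emb_Nil ys)
  then show ?case by (intro exI[of _ "[]"]) auto
next
  case (list_emb_Cons xs ys y)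
  then obtain c where c: "sorted_wrt (<) c" "\<forall>x\<in>set c. x < length ys" "xs = map (nth ys) c" by blast
  show ?case
    by (intro exI[of _ "map Suc c"]) (use c in \<open>auto simp: sorted_wrt_map\<close>)
next
  case (list_emb_Cons2 x y xs ys)
  then obtain c where c: "sorted_wrt (<) c" "\<forall>x\<in>set c. x < length ys" "xs = map (nth ys) c" by blast
  show ?case
    by (intro exI[of _ "0 # map Suc c"]) (use c list_emb_Cons2 in \<open>auto simp: sorted_wrt_map\<close>)
qed

lemma idx_subseq:
  assumes "sorted_wrt (<) c" "\<forall>x\<in>set c. x < length s"
  shows "subseq (map (nth s) c) s"
  using assms
proof (induction s arbitrary: c)
  case Nil
  then show ?case by (cases c) auto
next
  case (Cons a s)
  define c' where "c' = map (\<lambda>x. x - 1) (filter (\<lambda>x. x > 0) c)"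
  have pos: "\<forall>x\<in>set (filter (\<lambda>x. x > 0) c). x > 0" by auto
  have sf: "sorted_wrt (<) (filter (\<lambda>x. x > 0) c)" using Cons.prems(1) by (simp add: sorted_wrt_filter)
  have sc': "sorted_wrt (<) c'" unfolding c'_def sorted_wrt_map
    by (rule sorted_wrt_mono_rel[OF _ sf]) auto
  have bc': "\<forall>x\<in>set c'. x < length s" unfolding c'_def using Cons.prems(2) by auto
  have ih: "subseq (map (nth s) c') s" using Cons.IH[OF sc' bc'] .
  have eqf: "map (nth (a # s)) (filter (\<lambda>x. x > 0) c) = map (nth s) c'"
    unfolding c'_def by (induction c) (auto simp: nth_Cons')
  show ?case
  proof (cases c)
    case Nil then show ?thesis by simp
  next
    case (Cons m d)
    show ?thesis
    proof (cases m)
      case 0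
      have "\<forall>x\<in>set d. x > 0" using Cons.prems(1) \<open>c = m # d\<close> 0 by auto
      then have "filter (\<lambda>x. x > 0) c = d" using \<open>c = m # d\<close> 0 by (simp)
      then have "map (nth (a # s)) c = a # map (nth s) c'" using eqf \<open>c = m # d\<close> 0 by simp
      then show ?thesis using ih by simp
    next
      case (Suc m')
      have "\<forall>x\<in>set c. x > 0" using Cons.prems(1) \<open>c = m # d\<close> Suc by auto
      then have "filter (\<lambda>x. x > 0) c = c" by simp
      then have "map (nth (a # s)) c = map (nth s) c'" using eqf by simp
      then show ?thesis using ih by (simp add: list_emb_Cons)
    qed
  qed
qed

lemma lis_ub:
  assumes "sorted_wrt (<) c" "\<forall>x\<in>set c. x < length s" "sorted_wrt (\<lambda>a b. s!a < s!b) c"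
  shows "length c \<le> lis s"
proof -
  let ?S = "{length xs | xs. subseq xs s \<and> sorted_wrt (<) xs}"
  have fin: "finite ?S"
    by (rule finite_subset[of _ "{..length s}"]) (auto dest: list_emb_length)
  have "length (map (nth s) c) \<in> ?S"
    using idx_subseq[OF assms(1,2)] assms(3) by (auto simp: sorted_wrt_map intro!: exI[of _ "map (nth s) c"])
  then show ?thesis unfolding lis_def using fin by (simp add: Max_ge)
qed

lemma lis_ex:
  "\<exists>c. sorted_wrt (<) c \<and> (\<forall>x\<in>set c. x < length s) \<and> sorted_wrt (\<lambda>a b. s!a < s!b) c \<and> length c = lis s"
proof -
  let ?S = "{length xs | xs. subseq xs s \<and> sorted_wrt (<) xs}"
  have fin: "finite ?S"
    by (rule finite_subset[of _ "{..length s}"]) (auto dest: list_emb_length)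
  have "0 \<in> ?S" by (auto intro: exI[of _ "[]"])
  then have ne: "?S \<noteq> {}" by blast
  have "lis s \<in> ?S" unfolding lis_def using Max_in[OF fin ne] .
  then obtain xs where xs: "subseq xs s" "sorted_wrt (<) xs" "length xs = lis s" by auto
  then obtain c where c: "sorted_wrt (<) c" "\<forall>x\<in>set c. x < length s" "xs = map (nth s) c"
    using subseq_idx by blast
  show ?thesis using c xs by (intro exI[of _ c]) (auto simp: sorted_wrt_map)
qed
definition gstep :: "(nat \<Rightarrow> int) \<Rightarrow> nat list list \<Rightarrow> nat \<Rightarrow> nat list list" where
  "gstep v ps i =
     (if ps = [] \<or> v i > v (hd (last ps)) then ps @ [[i]]
      else (let j = (LEAST j. j < length ps \<and> v i \<le> v (hd (ps ! j)))
            in ps[j := i # ps ! j]))"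

definition chn :: "(nat \<Rightarrow> nat \<Rightarrow> bool) \<Rightarrow> (nat \<Rightarrow> int) \<Rightarrow> nat list \<Rightarrow> bool" where
  "chn R v c \<longleftrightarrow> c \<noteq> [] \<and> sorted_wrt R c \<and> sorted_wrt (\<lambda>y z. v y < v z) c"

definition pinv :: "(nat \<Rightarrow> nat \<Rightarrow> bool) \<Rightarrow> (nat \<Rightarrow> int) \<Rightarrow> nat list \<Rightarrow> nat list list \<Rightarrow> bool" where
  "pinv R v D ps \<longleftrightarrow>
    (\<forall>p\<in>set ps. p \<noteq> [] \<and> set p \<subseteq> set D) \<and>
    (\<forall>x\<in>set D. \<exists>a<length ps. x \<in> set (ps!a)) \<and>
    (\<forall>a b. a < b \<and> b < length ps \<longrightarrow> v (hd (ps!a)) < v (hd (ps!b))) \<and>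
    (\<forall>a<length ps. \<forall>x\<in>set (ps!a). v (hd (ps!a)) \<le> v x) \<and>
    (\<forall>a<length ps. \<forall>x\<in>set (ps!a). \<exists>c. chn R v c \<and> length c = Suc a \<and> last c = x \<and> set c \<subseteq> set D) \<and>
    (\<forall>a<length ps. \<forall>b<length ps. \<forall>x\<in>set (ps!a). \<forall>y\<in>set (ps!b). R x y \<and> v x < v y \<longrightarrow> a < b)"

lemma chn_last:
  assumes "chn R v c" "y \<in> set c" shows "v y \<le> v (last c)"
proof -
  have c: "c = butlast c @ [last c]" using assms(1) unfolding chn_def by simp
  have "sorted_wrt (\<lambda>y z. v y < v z) (butlast c @ [last c])" using assms(1) c unfolding chn_def by metis
  then have "\<forall>y\<in>set (butlast c). v y < v (last c)" by (simp add: sorted_wrt_append)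
  moreover have "y \<in> set (butlast c) \<or> y = last c" using assms(2) c by (metis rotate1.simps(2) set_ConsD set_rotate1)
  ultimately show ?thesis by force
qed

lemma chn_ext:
  assumes "chn R v c" "\<forall>y\<in>set c. R y i" "v (last c) < v i"
  shows "chn R v (c @ [i])"
proof -
  have "\<forall>y\<in>set c. v y < v i" using chn_last[OF assms(1)] assms(3) by force
  then show ?thesis using assms unfolding chn_def by (simp add: sorted_wrt_append)
qed

lemma chn_single: "chn R v [i]" unfolding chn_def by simp

lemma pinv_step:
  assumes inv: "pinv R v D ps" and asym: "\<And>x y. R x y \<Longrightarrow> \<not> R y x"
    and srt: "sorted_wrt R (D @ [i])"
  shows "pinv R v (D @ [i]) (gstep v ps i)"
proof -
  have before: "\<forall>y\<in>set D. R y i" using srt by (simp add: sorted_wrt_append)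
  have irr: "\<And>x. \<not> R x x" using asym by blast
  have notin: "i \<notin> set D" using before irr by blast
  note I = inv[unfolded pinv_def]
  have I1: "\<forall>p\<in>set ps. p \<noteq> [] \<and> set p \<subseteq> set D" using I[THEN conjunct1] .
  have I2: "\<forall>x\<in>set D. \<exists>a<length ps. x \<in> set (ps!a)" using I[THEN conjunct2, THEN conjunct1] .
  have I3: "\<And>a b. a < b \<Longrightarrow> b < length ps \<Longrightarrow> v (hd (ps!a)) < v (hd (ps!b))"
    using I[THEN conjunct2, THEN conjunct2, THEN conjunct1] by blast
  have I4: "\<And>a x. a<length ps \<Longrightarrow> x\<in>set (ps!a) \<Longrightarrow> v (hd (ps!a)) \<le> v x"
    using I[THEN conjunct2, THEN conjunct2, THEN conjunct2, THEN conjunct1] by blast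
  have I5: "\<And>a x. a<length ps \<Longrightarrow> x\<in>set (ps!a) \<Longrightarrow> \<exists>c. chn R v c \<and> length c = Suc a \<and> last c = x \<and> set c \<subseteq> set D"
    using I[THEN conjunct2, THEN conjunct2, THEN conjunct2, THEN conjunct2, THEN conjunct1] by blast
  have I6: "\<And>a b x y. a<length ps \<Longrightarrow> b<length ps \<Longrightarrow> x\<in>set (ps!a) \<Longrightarrow> y\<in>set (ps!b) \<Longrightarrow> R x y \<Longrightarrow> v x < v y \<Longrightarrow> a < b"
    using I[THEN conjunct2, THEN conjunct2, THEN conjunct2, THEN conjunct2, THEN conjunct2] by blast
  have inD: "\<And>a x. a < length ps \<Longrightarrow> x \<in> set (ps!a) \<Longrightarrow> x \<in> set D" using I1 nth_mem by blast
  have hdin: "\<And>a. a < length ps \<Longrightarrow> hd (ps!a) \<in> set (ps!a)" using I1 by (metis hd_in_set nth_mem)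
  have hdD: "\<And>a. a < length ps \<Longrightarrow> hd (ps!a) \<in> set D" using I1 hdin by (meson nth_mem subsetD)
  have extc: "\<exists>c. chn R v c \<and> length c = Suc a \<and> last c = i \<and> set c \<subseteq> set (D @ [i])"
    if "a = 0 \<or> (a - 1 < length ps \<and> v (hd (ps!(a-1))) < v i)" for a
  proof (cases "a = 0")
    case True then show ?thesis by (intro exI[of _ "[i]"]) (auto simp: chn_single)
  next
    case False
    then have a1: "a - 1 < length ps" "v (hd (ps!(a-1))) < v i" using that by auto
    obtain c where c: "chn R v c" "length c = Suc (a-1)" "last c = hd (ps!(a-1))" "set c \<subseteq> set D"
      using I5[OF a1(1) hdin[OF a1(1)]] by blast
    have "chn R v (c @ [i])" using chn_ext[OF c(1)] c(3,4) a1(2) before by auto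
    then show ?thesis using c False by (intro exI[of _ "c @ [i]"]) auto
  qed
  show ?thesis
  proof (cases "ps = [] \<or> v i > v (hd (last ps))")
    case True
    have g: "gstep v ps i = ps @ [[i]]" using True unfolding gstep_def by simp
    have lastle: "v (hd (ps!a)) \<le> v (hd (last ps))" if "a < length ps" for a
    proof -
      have "ps \<noteq> []" using that by auto
      then have "last ps = ps ! (length ps - 1)" by (simp add: last_conv_nth)
      show ?thesis
      proof (cases "a = length ps - 1")
        case True then show ?thesis using \<open>last ps = _\<close> by simp
      next
        case False then have "a < length ps - 1" using that by linarith
        moreover have "length ps - 1 < length ps" using that by linarith
        ultimately show ?thesis using I3[of a "length ps - 1"] \<open>last ps = _\<close> by simp
      qed
    qed
    have nth': "(ps @ [[i]]) ! a = (if a < length ps then ps ! a else [i])" if "a < Suc (length ps)" for a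
      using that by (auto simp: nth_append)
    show ?thesis unfolding g pinv_def
    proof (intro conjI allI ballI impI)
      show "\<And>p. p \<in> set (ps @ [[i]]) \<Longrightarrow> p \<noteq> []" using I1 by auto
      show "\<And>p. p \<in> set (ps @ [[i]]) \<Longrightarrow> set p \<subseteq> set (D @ [i])" using I1 by auto
      show "\<exists>a<length (ps @ [[i]]). x \<in> set ((ps @ [[i]]) ! a)" if xD: "x \<in> set (D @ [i])" for x
      proof (cases "x = i")
        case True then show ?thesis by (intro exI[of _ "length ps"]) simp
      next
        case False then obtain a where "a < length ps" "x \<in> set (ps!a)" using I2 xD by auto
        then show ?thesis by (intro exI[of _ a]) (simp add: nth_append)
      qed
      show "v (hd ((ps @ [[i]]) ! a)) < v (hd ((ps @ [[i]]) ! b))" if "a < b \<and> b < length (ps @ [[i]])" for a b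
      proof (cases "b < length ps")
        case True then show ?thesis using that I3 by (simp add: nth_append)
      next
        case False then have "b = length ps" using that by simp
        then show ?thesis using that True lastle[of a] by (auto simp: nth_append)
      qed
      show "v (hd ((ps @ [[i]]) ! a)) \<le> v x" if "a < length (ps @ [[i]])" "x \<in> set ((ps @ [[i]]) ! a)" for a x
        using that I4 by (cases "a < length ps") (auto simp: nth_append)
      show "\<exists>c. chn R v c \<and> length c = Suc a \<and> last c = x \<and> set c \<subseteq> set (D @ [i])"
        if "a < length (ps @ [[i]])" "x \<in> set ((ps @ [[i]]) ! a)" for a x
      proof (cases "a < length ps")
        case True then show ?thesis using that I5[of a x] by (auto simp: nth_append)
      next
        case False then have a: "a = length ps" "x = i" using that by (auto simp: nth_append)
        have "a = 0 \<or> (a - 1 < length ps \<and> v (hd (ps!(a-1))) < v i)"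
        proof (cases "ps = []")
          case False
          have "last ps = ps ! (length ps - 1)" using False by (simp add: last_conv_nth)
          then show ?thesis using a \<open>\<not> (ps = [])\<close> True by auto
        qed (use a in auto)
        then show ?thesis using extc a by blast
      qed
      show "a < b" if hh: "a < length (ps @ [[i]])" "b < length (ps @ [[i]])" "x \<in> set ((ps @ [[i]]) ! a)"
        "y \<in> set ((ps @ [[i]]) ! b)" "R x y \<and> v x < v y" for a b x y
      proof -
        have le: "a \<le> length ps" "b \<le> length ps" using hh(1,2) by simp_all
        consider "a < length ps" "b < length ps" | "a = length ps" | "a < length ps" "b = length ps"
        proof (cases "a = length ps")
          case False then have "a < length ps" using le by linarith
          then show ?thesis using that le by (cases "b = length ps") (simp_all add: nat_less_le)
        qed (use that in blast)
        then show ?thesis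
        proof cases
          case 1 then show ?thesis using hh I6[of a b x y] by (simp add: nth_append)
        next
          case 2
          then have "x = i" using hh by (simp add: nth_append)
          show ?thesis
          proof (cases "b < length ps")
            case True
            then have "y \<in> set D" using hh inD[of b y] by (simp add: nth_append)
            then show ?thesis using before asym hh \<open>x = i\<close> by blast
          next
            case False then have "y = i" using hh by (simp add: nth_append)
            then show ?thesis using irr hh \<open>x = i\<close> by blast
          qed
        next
          case 3 then show ?thesis by simp
        qed
      qed
    qed
  next
    case False
    then have ne: "ps \<noteq> []" and le: "v i \<le> v (hd (last ps))" by auto
    define j where "j = (LEAST j. j < length ps \<and> v i \<le> v (hd (ps ! j)))"
    have g: "gstep v ps i = ps[j := i # ps ! j]" using False unfolding gstep_def j_def by (simp add: Let_def)
    have ex: "length ps - 1 < length ps \<and> v i \<le> v (hd (ps ! (length ps - 1)))"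
      using ne le by (simp add: last_conv_nth)
    have j: "j < length ps" "v i \<le> v (hd (ps ! j))"
      using LeastI[of "\<lambda>j. j < length ps \<and> v i \<le> v (hd (ps ! j))", OF ex] unfolding j_def by auto
    have jmin: "v (hd (ps ! a)) < v i" if aj: "a < j" for a
    proof -
      have "\<not> (a < length ps \<and> v i \<le> v (hd (ps ! a)))"
        using not_less_Least[of a "\<lambda>j. j < length ps \<and> v i \<le> v (hd (ps ! j))"] aj unfolding j_def by blast
      moreover have "a < length ps" using aj j(1) by linarith
      ultimately show ?thesis by simp
    qed
    let ?ps = "ps[j := i # ps ! j]"
    have len: "length ?ps = length ps" by simp
    have mem: "x \<in> set (?ps ! a) \<longleftrightarrow> (if a = j then x = i \<or> x \<in> set (ps ! j) else x \<in> set (ps ! a))"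
      if "a < length ps" for a x using that j(1) by (auto simp: nth_list_update)
    have hd': "hd (?ps ! a) = (if a = j then i else hd (ps ! a))" if "a < length ps" for a
      using that j(1) by (auto simp: nth_list_update)
    show ?thesis unfolding g pinv_def len
    proof (intro conjI allI ballI impI)
      fix p assume "p \<in> set ?ps"
      then obtain a where a: "a < length ps" "p = ?ps ! a" by (metis in_set_conv_nth len)
      show "p \<noteq> []" using a j(1) I1 by (auto simp: nth_list_update)
      show "set p \<subseteq> set (D @ [i])"
      proof
        fix x assume "x \<in> set p"
        then have "x \<in> set (?ps ! a)" using a by simp
        then show "x \<in> set (D @ [i])" using mem[OF a(1)] inD[OF a(1)] inD[OF j(1)] by (auto split: if_splits)
      qed
    next
      fix x assume x: "x \<in> set (D @ [i])"
      show "\<exists>a<length ps. x \<in> set (?ps ! a)"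
      proof (cases "x = i")
        case True then show ?thesis using j(1) mem[OF j(1), of x] by (intro exI[of _ j]) simp
      next
        case False then obtain a where a: "a < length ps" "x \<in> set (ps!a)" using I2 x by auto
        then show ?thesis using mem[OF a(1), of x] by (intro exI[of _ a]) auto
      qed
    next
      fix a b assume ab: "a < b \<and> b < length ps"
      show "v (hd (?ps ! a)) < v (hd (?ps ! b))"
      proof -
        have a: "a < length ps" using ab by simp
        show ?thesis
        proof (cases "a = j")
          case True then show ?thesis using ab hd'[OF a] hd'[of b] I3[of j b] j by auto
        next
          case False
          show ?thesis
          proof (cases "b = j")
            case True then show ?thesis using ab hd'[OF a] hd'[of b] jmin[of a] \<open>a \<noteq> j\<close> by auto
          next
            case False then show ?thesis using ab hd'[OF a] hd'[of b] I3[of a b] \<open>a \<noteq> j\<close> by auto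
          qed
        qed
      qed
    next
      fix a x assume a: "a < length ps" and x: "x \<in> set (?ps ! a)"
      show "v (hd (?ps ! a)) \<le> v x"
      proof (cases "a = j")
        case True
        then have "x = i \<or> x \<in> set (ps ! j)" using mem[OF a] x by simp
        moreover have "hd (?ps ! a) = i" using hd'[OF a] True by simp
        ultimately show ?thesis using I4[of j x] j by auto
      next
        case False
        then have "x \<in> set (ps ! a)" using mem[OF a] x by simp
        moreover have "hd (?ps ! a) = hd (ps ! a)" using hd'[OF a] False by simp
        ultimately show ?thesis using I4[of a x] a by auto
      qed
    next
      fix a x assume a: "a < length ps" and x: "x \<in> set (?ps ! a)"
      show "\<exists>c. chn R v c \<and> length c = Suc a \<and> last c = x \<and> set c \<subseteq> set (D @ [i])"
      proof (cases "a = j \<and> x = i")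
        case True
        have "a = 0 \<or> (a - 1 < length ps \<and> v (hd (ps!(a-1))) < v i)"
          using True jmin[of "a - 1"] a by (cases a) auto
        then show ?thesis using extc True by blast
      next
        case False
        then have "x \<in> set (ps ! a)" using mem[OF a] x by (auto split: if_splits)
        then show ?thesis using I5[OF a] by fastforce
      qed
    next
      fix a b x y assume a: "a < length ps" and b: "b < length ps" and x: "x \<in> set (?ps ! a)"
        and y: "y \<in> set (?ps ! b)" and r: "R x y \<and> v x < v y"
      show "a < b"
      proof (cases "x = i")
        case True
        show ?thesis
        proof (cases "y = i")
          case True then show ?thesis using \<open>x = i\<close> irr r by blast
        next
          case False
          then have "y \<in> set (ps ! b)" using mem[OF b] y by (auto split: if_splits)
          then have "y \<in> set D" using inD[OF b] by blast
          then show ?thesis using before asym r \<open>x = i\<close> by blast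
        qed
      next
        case False
        then have xa: "x \<in> set (ps ! a)" using mem[OF a] x by (auto split: if_splits)
        show ?thesis
        proof (cases "y = i")
          case True
          then have bj: "b = j" using mem[OF b] y notin inD[OF b] by (auto split: if_splits)
          have "v (hd (ps ! a)) < v (hd (ps ! j))" using I4[OF a xa] r True j(2) by auto
          show ?thesis
          proof (rule ccontr)
            assume "\<not> a < b"
            then have "j < a \<or> a = j" using bj by linarith
            then show False using I3[of j a] a \<open>v (hd (ps ! a)) < v (hd (ps ! j))\<close> by auto
          qed
        next
          case False
          then have "y \<in> set (ps ! b)" using mem[OF b] y by (auto split: if_splits)
          then show ?thesis using I6[OF a b xa] r by blast
        qed
      qed
    qed
  qed
qed

lemma pinv_fold:
  assumes "sorted_wrt R xs" "\<And>x y. R x y \<Longrightarrow> \<not> R y x"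
  shows "pinv R v xs (foldl (gstep v) [] xs)"
  using assms(1)
proof (induction xs rule: rev_induct)
  case Nil then show ?case by (simp add: pinv_def)
next
  case (snoc x xs)
  then have "sorted_wrt R xs" by (simp add: sorted_wrt_append)
  then show ?case using pinv_step[OF snoc.IH assms(2) snoc.prems] by simp
qed


lemma pinv_cover: "pinv R v D ps \<Longrightarrow> x \<in> set D \<Longrightarrow> \<exists>a<length ps. x \<in> set (ps!a)"
  unfolding pinv_def by (drule conjunct2, drule conjunct1) blast

lemma pinv_mono: "pinv R v D ps \<Longrightarrow> a<length ps \<Longrightarrow> b<length ps \<Longrightarrow> x\<in>set (ps!a) \<Longrightarrow> y\<in>set (ps!b)
   \<Longrightarrow> R x y \<Longrightarrow> v x < v y \<Longrightarrow> a < b"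
  unfolding pinv_def by (drule conjunct2, drule conjunct2, drule conjunct2, drule conjunct2, drule conjunct2) blast

lemma pinv_chain: "pinv R v D ps \<Longrightarrow> a<length ps \<Longrightarrow> x\<in>set (ps!a) \<Longrightarrow>
   \<exists>c. chn R v c \<and> length c = Suc a \<and> last c = x \<and> set c \<subseteq> set D"
  unfolding pinv_def by (drule conjunct2, drule conjunct2, drule conjunct2, drule conjunct2, drule conjunct1) blast

lemma chn_butlast:
  assumes "chn R v c" "y \<in> set (butlast c)" shows "R y (last c) \<and> v y < v (last c)"
proof -
  have c: "c = butlast c @ [last c]" using assms(1) unfolding chn_def by simp
  have "sorted_wrt (\<lambda>y z. v y < v z) (butlast c @ [last c])" "sorted_wrt R (butlast c @ [last c])"
    using assms(1) c unfolding chn_def by metis+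
  then show ?thesis using assms(2) by (simp add: sorted_wrt_append)
qed

lemma sorted_wrt_butlast': "sorted_wrt P c \<Longrightarrow> sorted_wrt P (butlast c)"
  unfolding butlast_conv_take by (rule sorted_wrt_take)

lemma pstep_g: "pstep s = gstep (\<lambda>x. s!x)"
  by (intro ext) (simp add: pstep_def gstep_def top_val_def)

lemma qstep_g: "qstep s = gstep (\<lambda>x. - (s!x))"
  by (intro ext) (simp add: qstep_def gstep_def top_val_def)

lemma pile_bound:
  fixes s :: "int list"
  defines "Lp \<equiv> patience s" and "Lq \<equiv> rev_patience s"
  assumes a: "a < length Lp" "x \<in> set (Lp ! a)" and b: "b < length Lq" "x \<in> set (Lq ! b)"
  shows "a + b + 1 \<le> lis s"
proof -
  let ?n = "length s"
  have ip: "pinv (<) (\<lambda>x. s!x) [0..<?n] Lp"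
    unfolding Lp_def patience_def pstep_g by (rule pinv_fold) auto
  have iq: "pinv (>) (\<lambda>x. - (s!x)) (rev [0..<?n]) Lq"
    unfolding Lq_def rev_patience_def qstep_g by (rule pinv_fold) (auto simp: sorted_wrt_rev)
  obtain cp where cp: "chn (<) (\<lambda>x. s!x) cp" "length cp = Suc a" "last cp = x" "set cp \<subseteq> {0..<?n}"
    using pinv_chain[OF ip a] by auto
  obtain cq where cq: "chn (>) (\<lambda>x. - (s!x)) cq" "length cq = Suc b" "last cq = x" "set cq \<subseteq> {0..<?n}"
    using pinv_chain[OF iq b] by auto
  define d where "d = butlast cp @ rev cq"
  have len: "length d = a + b + 1" unfolding d_def using cp(2) cq(2) by simp
  have s1: "sorted_wrt (<) (butlast cp)" "sorted_wrt (\<lambda>y z. s!y < s!z) (butlast cp)"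
    using cp(1) unfolding chn_def by (auto intro: sorted_wrt_butlast')
  have s2: "sorted_wrt (<) (rev cq)" "sorted_wrt (\<lambda>y z. s!y < s!z) (rev cq)"
    using cq(1) unfolding chn_def by (auto simp: sorted_wrt_rev)
  have cross: "y < z \<and> s!y < s!z" if y: "y \<in> set (butlast cp)" and z: "z \<in> set cq" for y z
  proof -
    have yx: "y < x" "s!y < s!x" using chn_butlast[OF cp(1) y] cp(3) by auto
    have cqe: "cq = butlast cq @ [last cq]" using cq(1) unfolding chn_def by simp
    have "z \<in> set (butlast cq @ [last cq])" using z cqe by simp
    then have "z = x \<or> z \<in> set (butlast cq)" using cq(3) by auto
    moreover have "x < z \<and> s!x < s!z" if "z \<in> set (butlast cq)"
      using chn_butlast[OF cq(1) that] cq(3) by auto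
    ultimately show ?thesis using yx by auto
  qed
  have sd: "sorted_wrt (<) d" "sorted_wrt (\<lambda>y z. s!y < s!z) d"
    unfolding d_def using s1 s2 cross by (auto simp: sorted_wrt_append)
  have bd: "\<forall>y\<in>set d. y < ?n" unfolding d_def using cp(4) cq(4) in_set_butlastD by fastforce
  show ?thesis using lis_ub[OF sd(1) bd sd(2)] len by simp
qed

theorem lemma15:
  fixes s :: "int list" and k :: nat
  assumes "1 \<le> k" and "k \<le> lis s"
  shows "set (patience s ! (k - 1)) \<inter> set (rev_patience s ! (lis s - k)) \<noteq> {}"
proof -
  let ?n = "length s"
  let ?L = "lis s"
  define Lp where "Lp = patience s"
  define Lq where "Lq = rev_patience s"
  have ip: "pinv (<) (\<lambda>x. s!x) [0..<?n] Lp"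
    unfolding Lp_def patience_def pstep_g by (rule pinv_fold) auto
  have iq: "pinv (>) (\<lambda>x. - (s!x)) (rev [0..<?n]) Lq"
    unfolding Lq_def rev_patience_def qstep_g by (rule pinv_fold) (auto simp: sorted_wrt_rev)
  obtain c where c: "sorted_wrt (<) c" "\<forall>x\<in>set c. x < ?n" "sorted_wrt (\<lambda>a b. s!a < s!b) c" "length c = ?L"
    using lis_ex by blast
  have cn: "c ! m < ?n" if "m < ?L" for m using c(2,4) that by auto
  define pa where "pa m = (SOME a. a < length Lp \<and> c!m \<in> set (Lp!a))" for m
  define qa where "qa m = (SOME a. a < length Lq \<and> c!m \<in> set (Lq!a))" for m
  have pa: "pa m < length Lp \<and> c!m \<in> set (Lp!(pa m))" if "m < ?L" for m
    unfolding pa_def by (rule someI_ex) (use pinv_cover[OF ip] cn[OF that] in auto)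
  have qa: "qa m < length Lq \<and> c!m \<in> set (Lq!(qa m))" if "m < ?L" for m
    unfolding qa_def by (rule someI_ex) (use pinv_cover[OF iq] cn[OF that] in auto)
  have step1: "c ! m < c ! Suc m" if "Suc m < ?L" for m
    using sorted_wrt_nth_less[OF c(1), of m "Suc m"] c(4) that by simp
  have step2: "s!(c!m) < s!(c!Suc m)" if "Suc m < ?L" for m
    using sorted_wrt_nth_less[OF c(3), of m "Suc m"] c(4) that by simp
  have pam: "pa (Suc m) > pa m" if h: "Suc m < ?L" for m
  proof -
    have m: "m < ?L" using h by simp
    show ?thesis
      using pinv_mono[OF ip conjunct1[OF pa[OF m]] conjunct1[OF pa[OF h]] conjunct2[OF pa[OF m]] conjunct2[OF pa[OF h]]
        step1[OF h]] step2[OF h] by simp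
  qed
  have qam: "qa m > qa (Suc m)" if h: "Suc m < ?L" for m
  proof -
    have m: "m < ?L" using h by simp
    show ?thesis
      using pinv_mono[OF iq conjunct1[OF qa[OF h]] conjunct1[OF qa[OF m]] conjunct2[OF qa[OF h]] conjunct2[OF qa[OF m]]]
        step1[OF h] step2[OF h] by simp
  qed
  have pge: "m < ?L \<longrightarrow> m \<le> pa m" for m
  proof (induction m)
    case (Suc m) then show ?case using pam[of m] by auto
  qed simp
  have qge: "k' < ?L \<longrightarrow> k' \<le> qa (?L - 1 - k')" for k'
  proof (induction k')
    case (Suc k')
    show ?case
    proof
      assume h: "Suc k' < ?L"
      have e: "Suc (?L - 1 - Suc k') = ?L - 1 - k'" using h by linarith
      have "qa (?L - 1 - k') < qa (?L - 1 - Suc k')" using qam[of "?L - 1 - Suc k'"] e h by simp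
      then show "Suc k' \<le> qa (?L - 1 - Suc k')" using Suc h by linarith
    qed
  qed simp
  define m where "m = k - 1"
  have mL: "m < ?L" using assms unfolding m_def by linarith
  have bnd: "pa m + qa m + 1 \<le> ?L"
    using pile_bound[of "pa m" s "c!m" "qa m"] pa[OF mL] qa[OF mL] unfolding Lp_def Lq_def by simp
  have q1: "?L - 1 - m \<le> qa m" using qge[of "?L - 1 - m"] mL by (simp add: Suc_leI)
  have p1: "m \<le> pa m" using pge mL by blast
  have "pa m = k - 1" "qa m = ?L - k" using bnd q1 p1 mL assms unfolding m_def by linarith+
  then have "c!m \<in> set (Lp ! (k - 1))" "c!m \<in> set (Lq ! (?L - k))" using pa[OF mL] qa[OF mL] by simp_all
  then show ?thesis unfolding Lp_def Lq_def by blast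
qed

end
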